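(* For any family of pointed spaces $\{(X_i,x_i)\}_{i\in I}$ and any $n\geq1$, $$\mathcal{H}_n\Big(\prod_{i\in I}X_i,x_\ast\Big)\cong\prod_{i\in I}\mathcal{H}_n(X_i,x_i),$$ where $x_\ast=(x_i)_{i\in I}\in\prod_{i\in I}X_i$ (product topology).
   Context: For $n\geq1$, the $n$-dimensional Hawaiian earring is $\mathbb{H}^n=\{(r_0,\dots,r_n)\in\mathbb{R}^{n+1} : (r_0-1/k)^2+\sum_{i=1}^n r_i^2=(1/k)^2 \text{ for some } k\in\mathbb{N}\}$ with base point $\theta=(0,\dots,0)$; $S^n_k$ denotes the $n$-sphere of radius $1/k$ in it. For a pointed space $(X,x_0)$, the $n$-Hawaiian group $\mathcal{H}_n(X,x_0)$ is the set of pointed homotopy classes (rel $\{\theta\}$) of continuous maps $f:(\mathbb{H}^n,\theta)\to(X,x_0)$, with group operation $[f][g]=[f\ast g]$, where $(f\ast g)|_{S^n_k}$ is the usual concatenation (as in $\pi_n$) of $f|_{S^n_k}$ and $g|_{S^n_k}$ for each $k$. *)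

theory Defs
  imports "HOL-Analysis.Analysis" "HOL-Algebra.Product_Groups"
begin

text \<open>Points of R^(n+1) are represented as functions nat => real whose coordinates
  beyond n vanish; nat => real carries the product (= Euclidean on the finite-dimensional
  subspace) topology.\<close>

type_synonym pt = "nat \<Rightarrow> real"

definition hbase :: pt where "hbase = (\<lambda>i. 0)"

definition hsphere :: "nat \<Rightarrow> nat \<Rightarrow> pt set" where
  "hsphere n k = {r. (\<forall>i>n. r i = 0) \<and>
      (r 0 - 1 / real k)\<^sup>2 + (\<Sum>i\<in>{1..n}. (r i)\<^sup>2) = (1 / real k)\<^sup>2}"

definition hawaiian_earring :: "nat \<Rightarrow> pt set" where
  "hawaiian_earring n = (\<Union>k\<in>{1..}. hsphere n k)"

definition HE :: "nat \<Rightarrow> pt topology" where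
  "HE n = top_of_set (hawaiian_earring n)"

definition open_cube :: "nat \<Rightarrow> pt set" where
  "open_cube n = {t. (\<forall>i\<in>{1..n}. 0 < t i \<and> t i < 1) \<and> (\<forall>i. i \<notin> {1..n} \<longrightarrow> t i = 0)}"

text \<open>The standard quotient map I^n -> S^n_k collapsing the boundary of I^n to theta:
  the interior is sent homeomorphically onto R^n (via tan) and then onto S^n_k minus theta
  by inverse stereographic projection from theta.\<close>
definition cube_to_sphere :: "nat \<Rightarrow> nat \<Rightarrow> pt \<Rightarrow> pt" where
  "cube_to_sphere n k t =
     (if t \<in> open_cube n then
        (let u = (\<lambda>i. tan (pi * (t i - 1/2)));
             s = (4 / (real k)\<^sup>2) / (4 / (real k)\<^sup>2 + (\<Sum>i\<in>{1..n}. (u i)\<^sup>2))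
         in (\<lambda>i. if i = 0 then s * (2 / real k) else if i \<in> {1..n} then s * u i else 0))
      else hbase)"

text \<open>Concatenation (f * g): on each sphere S^n_k, the usual pi_n-concatenation of
  f|S^n_k and g|S^n_k along the first cube coordinate.\<close>
definition hconcat :: "nat \<Rightarrow> (pt \<Rightarrow> 'a) \<Rightarrow> (pt \<Rightarrow> 'a) \<Rightarrow> pt \<Rightarrow> 'a" where
  "hconcat n f g p =
     (if p = hbase then f hbase
      else (let k = (THE k. k \<ge> 1 \<and> p \<in> hsphere n k);
                t = (THE t. t \<in> open_cube n \<and> cube_to_sphere n k t = p)
            in if t 1 \<le> 1/2 then f (cube_to_sphere n k (t(1 := 2 * t 1)))
               else g (cube_to_sphere n k (t(1 := 2 * t 1 - 1)))))"

definition hmaps :: "nat \<Rightarrow> 'a topology \<Rightarrow> 'a \<Rightarrow> (pt \<Rightarrow> 'a) set" where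
  "hmaps n X x0 = {f. continuous_map (HE n) X f \<and> f hbase = x0}"

definition hclass :: "nat \<Rightarrow> 'a topology \<Rightarrow> 'a \<Rightarrow> (pt \<Rightarrow> 'a) \<Rightarrow> (pt \<Rightarrow> 'a) set" where
  "hclass n X x0 f = {g \<in> hmaps n X x0. homotopic_with (\<lambda>h. h hbase = x0) (HE n) X f g}"

definition hawaiian_group :: "nat \<Rightarrow> 'a topology \<Rightarrow> 'a \<Rightarrow> (pt \<Rightarrow> 'a) set monoid" where
  "hawaiian_group n X x0 =
     \<lparr>carrier = hclass n X x0 ` hmaps n X x0,
      monoid.mult = (\<lambda>A B. hclass n X x0 (hconcat n (SOME f. f \<in> A) (SOME g. g \<in> B))),
      one = hclass n X x0 (\<lambda>p. x0)\<rparr>"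

end

theory Submission
  imports Defs
begin


definition Nn :: "nat \<Rightarrow> pt \<Rightarrow> real" where
  "Nn n p = (\<Sum>i\<in>{0..n}. (p i)\<^sup>2)"

lemma sum_split0: "(\<Sum>i\<in>{0..n::nat}. f i) = f 0 + (\<Sum>i\<in>{1..n}. (f i :: real))"
  using sum.atLeast_Suc_atMost[of 0 n f] by simp

lemma hsphere_N:
  assumes p: "p \<in> hsphere n k" and k: "k \<ge> 1"
  shows "Nn n p = 2 * p 0 / real k"
proof -
  have e: "(p 0 - 1 / real k)\<^sup>2 + (\<Sum>i\<in>{1..n}. (p i)\<^sup>2) = (1 / real k)\<^sup>2"
    using p by (simp add: hsphere_def)
  have "(p 0 - 1 / real k)\<^sup>2 = (p 0)\<^sup>2 - 2 * p 0 / real k + (1 / real k)\<^sup>2"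
    using k by (simp add: power2_eq_square field_simps)
  then show ?thesis using e by (simp add: Nn_def sum_split0)
qed

lemma hsphere_pos:
  assumes p: "p \<in> hsphere n k" and k: "k \<ge> 1" and nb: "p \<noteq> hbase"
  shows "0 < p 0"
proof -
  have N: "Nn n p = 2 * p 0 / real k" by (rule hsphere_N[OF p k])
  have "Nn n p \<ge> 0" unfolding Nn_def by (simp add: sum_nonneg)
  then have ge: "p 0 \<ge> 0" using N k by (simp add: zero_le_divide_iff)
  show ?thesis
  proof (rule ccontr)
    assume "\<not> 0 < p 0"
    then have "p 0 = 0" using ge by simp
    then have "Nn n p = 0" using N by simp
    then have z: "\<forall>i\<in>{0..n}. (p i)\<^sup>2 = 0"
      unfolding Nn_def by (subst sum_nonneg_eq_0_iff[symmetric]) auto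
    have "p = hbase"
    proof
      fix i show "p i = hbase i"
        using z p by (cases "i \<le> n") (auto simp: hbase_def hsphere_def)
    qed
    then show False using nb by simp
  qed
qed

lemma hbase_in_hsphere: "hbase \<in> hsphere n k"
  by (simp add: hsphere_def hbase_def)

lemma hsphere_unique:
  assumes "p \<in> hsphere n k" "p \<in> hsphere n k'" "k \<ge> 1" "k' \<ge> 1" "p \<noteq> hbase"
  shows "k = k'"
proof -
  have "0 < p 0" using hsphere_pos assms by blast
  moreover have "2 * p 0 / real k = 2 * p 0 / real k'"
    using hsphere_N assms by metis
  ultimately show ?thesis using assms by (simp add: field_simps)
qed

lemma the_k:
  assumes "p \<in> hsphere n k" "k \<ge> 1" "p \<noteq> hbase"
  shows "(THE k. k \<ge> 1 \<and> p \<in> hsphere n k) = k"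
  using assms hsphere_unique by (intro the_equality) blast+

lemma sphere_alg:
  fixes k U :: real
  assumes k: "k > 0" and U: "U \<ge> 0"
  shows "((4/k\<^sup>2)/(4/k\<^sup>2 + U) * (2/k) - 1/k)\<^sup>2 + ((4/k\<^sup>2)/(4/k\<^sup>2 + U))\<^sup>2 * U = (1/k)\<^sup>2"
proof -
  define a where "a = 4/k\<^sup>2"
  define s where "s = a / (a + U)"
  have pos: "a + U > 0" using k U by (simp add: a_def add_pos_nonneg)
  have sa: "s * (a + U) = a" using pos by (simp add: s_def)
  have "(s*(2/k) - 1/k)\<^sup>2 + s\<^sup>2*U = s*(s*(a+U)) - s*a + (1/k)\<^sup>2"
    using k by (simp add: a_def power2_eq_square field_simps)
  also have "\<dots> = (1/k)\<^sup>2" by (simp add: sa)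
  finally show ?thesis by (simp add: a_def s_def)
qed



lemma c2s_eq:
  assumes "t \<in> open_cube n"
  shows "cube_to_sphere n k t = (\<lambda>i. if i = 0 then
     ((4 / (real k)\<^sup>2) / (4 / (real k)\<^sup>2 + (\<Sum>i\<in>{1..n}. (tan (pi * (t i - 1/2)))\<^sup>2))) * (2 / real k)
     else if i \<in> {1..n} then
     ((4 / (real k)\<^sup>2) / (4 / (real k)\<^sup>2 + (\<Sum>i\<in>{1..n}. (tan (pi * (t i - 1/2)))\<^sup>2))) * tan (pi * (t i - 1/2))
     else 0)"
  using assms unfolding cube_to_sphere_def Let_def by (simp only: if_True)

lemma c2s_in:
  assumes k: "k \<ge> 1"
  shows "cube_to_sphere n k t \<in> hsphere n k"
proof (cases "t \<in> open_cube n")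
  case False
  then show ?thesis by (simp add: cube_to_sphere_def hbase_in_hsphere)
next
  case True
  define u where "u = (\<lambda>i. tan (pi * (t i - 1/2)))"
  define U where "U = (\<Sum>i\<in>{1..n}. (u i)\<^sup>2)"
  define s where "s = (4 / (real k)\<^sup>2) / (4 / (real k)\<^sup>2 + U)"
  have c: "cube_to_sphere n k t = (\<lambda>i. if i = 0 then s * (2 / real k) else if i \<in> {1..n} then s * u i else 0)"
    unfolding c2s_eq[OF True] u_def U_def s_def ..
  have U0: "U \<ge> 0" by (simp add: U_def sum_nonneg)
  have sum: "(\<Sum>i\<in>{1..n}. (if i = 0 then s * (2 / real k) else if i \<in> {1..n} then s * u i else 0)\<^sup>2) = s\<^sup>2 * U"
    by (simp add: U_def sum_distrib_left power_mult_distrib)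
  have "(s * (2 / real k) - 1 / real k)\<^sup>2 + s\<^sup>2 * U = (1 / real k)\<^sup>2"
    unfolding s_def using sphere_alg[of "real k" U] k U0 by simp
  then show ?thesis unfolding c hsphere_def using sum by simp
qed

definition tt :: "nat \<Rightarrow> real \<Rightarrow> pt \<Rightarrow> pt" where
  "tt n k p = (\<lambda>i. if i \<in> {1..n} then 1/2 + arctan (2 * p i / (k * p 0)) / pi else 0)"

lemma tt_cube: "tt n k p \<in> open_cube n"
proof -
  have "0 < 1/2 + arctan x / pi \<and> 1/2 + arctan x / pi < 1" for x
  proof -
    have "- (pi/2) < arctan x" "arctan x < pi/2" by (rule arctan_lbound, rule arctan_ubound)
    then show ?thesis by (simp add: field_simps)
  qed
  then show ?thesis by (simp add: open_cube_def tt_def)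
qed

lemma tan_tt: "i \<in> {1..n} \<Longrightarrow> tan (pi * (tt n k p i - 1/2)) = 2 * p i / (k * p 0)"
  by (simp add: tt_def tan_arctan)

lemma c2s_tt:
  assumes p: "p \<in> hsphere n k" and k: "k \<ge> 1" and nb: "p \<noteq> hbase"
  shows "cube_to_sphere n k (tt n (real k) p) = p"
proof -
  have p0: "0 < p 0" by (rule hsphere_pos[OF p k nb])
  have N: "Nn n p = 2 * p 0 / real k" by (rule hsphere_N[OF p k])
  define S where "S = (\<Sum>i\<in>{1..n}. (p i)\<^sup>2)"
  have S: "S = 2 * p 0 / real k - (p 0)\<^sup>2" using N by (simp add: Nn_def sum_split0 S_def)
  define U where "U = (\<Sum>i\<in>{1..n}. (tan (pi * (tt n (real k) p i - 1/2)))\<^sup>2)"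
  have U: "U = 4 * S / ((real k)\<^sup>2 * (p 0)\<^sup>2)"
    unfolding U_def S_def by (simp add: tan_tt sum_divide_distrib power_divide power_mult_distrib sum_distrib_left)
  have kpos: "real k > 0" using k by simp
  have s: "(4 / (real k)\<^sup>2) / (4 / (real k)\<^sup>2 + U) = real k * p 0 / 2"
    unfolding U S using p0 kpos by (simp add: field_simps power2_eq_square)
  show ?thesis
  proof
    fix i
    show "cube_to_sphere n k (tt n (real k) p) i = p i"
      unfolding c2s_eq[OF tt_cube] U_def[symmetric] s
      using p0 kpos p by (auto simp: tan_tt hsphere_def)
  qed
qed

lemma c2s_inj:
  assumes t: "t \<in> open_cube n" and k: "k \<ge> 1"
  shows "tt n (real k) (cube_to_sphere n k t) = t"
proof
  fix i
  define S where "S = (4 / (real k)\<^sup>2) / (4 / (real k)\<^sup>2 + (\<Sum>i\<in>{1..n}. (tan (pi * (t i - 1/2)))\<^sup>2))"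
  have Spos: "S > 0" unfolding S_def using k by (intro divide_pos_pos add_pos_nonneg) (auto intro: sum_nonneg)
  have c: "cube_to_sphere n k t = (\<lambda>i. if i = 0 then S * (2 / real k)
     else if i \<in> {1..n} then S * tan (pi * (t i - 1/2)) else 0)"
    unfolding c2s_eq[OF t] S_def ..
  show "tt n (real k) (cube_to_sphere n k t) i = t i"
  proof (cases "i \<in> {1..n}")
    case True
    then have ti: "0 < t i" "t i < 1" using t by (auto simp: open_cube_def)
    have "2 * (S * tan (pi * (t i - 1/2))) / (real k * (S * (2 / real k))) = tan (pi * (t i - 1/2))"
      using Spos k by (simp add: field_simps)
    moreover have "arctan (tan (pi * (t i - 1/2))) = pi * (t i - 1/2)"
      using ti by (intro arctan_tan) (simp_all add: field_simps)
    ultimately show ?thesis using True by (auto simp: tt_def c)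
  next
    case False
    then show ?thesis using t by (auto simp: tt_def open_cube_def)
  qed
qed

lemma the_t:
  assumes p: "p \<in> hsphere n k" and k: "k \<ge> 1" and nb: "p \<noteq> hbase"
  shows "(THE t. t \<in> open_cube n \<and> cube_to_sphere n k t = p) = tt n (real k) p"
  using c2s_tt[OF assms] tt_cube c2s_inj[OF _ k] by (intro the_equality) auto



definition "kk n p = 2 * p 0 / Nn n p"
definition "uu n p i = 2 * p i / (kk n p * p 0)"
definition "ww n p = uu n p 1"
definition "RR n p = (\<Sum>i\<in>{2..n}. (uu n p i)\<^sup>2)"
definition "aa n p = 4 / (kk n p)\<^sup>2"
definition "DD n p = 4 * aa n p * (ww n p)\<^sup>2 + 4 * (ww n p)\<^sup>2 * RR n p + ((ww n p)\<^sup>2 - 1)\<^sup>2"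
definition "sp n p = 4 * aa n p * (ww n p)\<^sup>2 / DD n p"
definition Fm :: "nat \<Rightarrow> pt \<Rightarrow> pt" where
  "Fm n p = (\<lambda>i. if i = 0 then sp n p * (2 / kk n p)
     else if i = 1 then 2 * aa n p * ww n p * ((ww n p)\<^sup>2 - 1) / DD n p
     else if i \<in> {2..n} then sp n p * uu n p i else 0)"

lemma tan_double_shift:
  fixes w :: real
  assumes w: "w \<noteq> 0"
  shows "tan (pi/2 + 2 * arctan w) = (w\<^sup>2 - 1) / (2 * w)"
    "tan (2 * arctan w - pi/2) = (w\<^sup>2 - 1) / (2 * w)"
proof -
  define th where "th = arctan w"
  have q: "1 + w\<^sup>2 > 0" by (simp add: add_pos_nonneg)
  have cs: "(cos th)\<^sup>2 = 1 / (1 + w\<^sup>2)" "(sin th)\<^sup>2 = w\<^sup>2 / (1 + w\<^sup>2)"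
    "sin th * cos th = w / (1 + w\<^sup>2)"
    unfolding th_def cos_arctan sin_arctan using q
    by (simp_all add: power_divide power2_eq_square)
  have c2: "cos (2 * th) = (1 - w\<^sup>2) / (1 + w\<^sup>2)"
    unfolding cos_double cs diff_divide_distrib ..
  have s2: "sin (2 * th) = 2 * w / (1 + w\<^sup>2)"
    unfolding sin_double using cs(3) by (simp add: mult.assoc)
  have s2nz: "sin (2 * th) \<noteq> 0" using s2 w q by simp
  have e1: "sin (pi/2 + 2 * th) = cos (2 * th)" "cos (pi/2 + 2 * th) = - sin (2 * th)"
    by (simp_all add: sin_add cos_add)
  have e2: "sin (2 * th - pi/2) = - cos (2 * th)" "cos (2 * th - pi/2) = sin (2 * th)"
    by (simp_all add: sin_diff cos_diff)
  show "tan (pi/2 + 2 * arctan w) = (w\<^sup>2 - 1) / (2 * w)"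
    unfolding th_def[symmetric] tan_def e1 c2 s2 using q w
    by (simp add: divide_simps)
  show "tan (2 * arctan w - pi/2) = (w\<^sup>2 - 1) / (2 * w)"
    unfolding th_def[symmetric] tan_def e2 c2 s2 using q w
    by (simp add: divide_simps)
qed

lemma dbl_alg:
  fixes a w R :: real
  assumes w: "w \<noteq> 0" and a: "a > 0" and R: "R \<ge> 0"
  defines "D \<equiv> 4 * a * w\<^sup>2 + 4 * w\<^sup>2 * R + (w\<^sup>2 - 1)\<^sup>2"
  shows "a / (a + (((w\<^sup>2 - 1) / (2 * w))\<^sup>2 + R)) = 4 * a * w\<^sup>2 / D"
    "a / (a + (((w\<^sup>2 - 1) / (2 * w))\<^sup>2 + R)) * ((w\<^sup>2 - 1) / (2 * w)) = 2 * a * w * (w\<^sup>2 - 1) / D"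
proof -
  have w2: "w\<^sup>2 > 0" using w by simp
  have Dp: "D > 0" unfolding D_def using w2 a R
    by (intro add_pos_nonneg) (auto intro: mult_nonneg_nonneg)
  have e: "a + (((w\<^sup>2 - 1) / (2 * w))\<^sup>2 + R) = D / (4 * w\<^sup>2)"
    unfolding D_def using w by (simp add: field_simps power2_eq_square)
  show "a / (a + (((w\<^sup>2 - 1) / (2 * w))\<^sup>2 + R)) = 4 * a * w\<^sup>2 / D"
    unfolding e using w Dp by (simp add: field_simps)
  then have "a / (a + (((w\<^sup>2 - 1) / (2 * w))\<^sup>2 + R)) * ((w\<^sup>2 - 1) / (2 * w))
      = 4 * a * w\<^sup>2 / D * ((w\<^sup>2 - 1) / (2 * w))" by simp
  also have "\<dots> = 2 * a * w * (w\<^sup>2 - 1) / D"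
    using w Dp by (simp add: field_simps power2_eq_square)
  finally show "a / (a + (((w\<^sup>2 - 1) / (2 * w))\<^sup>2 + R)) * ((w\<^sup>2 - 1) / (2 * w)) = 2 * a * w * (w\<^sup>2 - 1) / D" .
qed

lemma sum_split1: "n \<ge> 1 \<Longrightarrow> (\<Sum>i\<in>{1..n::nat}. f i) = f 1 + (\<Sum>i\<in>{2..n}. (f i :: real))"
  using sum.atLeast_Suc_atMost[of 1 n f] by (simp add: numeral_2_eq_2)

lemma kk_sphere:
  assumes p: "p \<in> hsphere n k" and k: "k \<ge> 1" and nb: "p \<noteq> hbase"
  shows "kk n p = real k"
  using hsphere_N[OF p k] hsphere_pos[OF p k nb] k by (simp add: kk_def)

lemma c2s_mod:
  assumes n: "n \<ge> 1" and t: "t \<in> open_cube n" and kp: "kk n p = real k" and k: "k \<ge> 1"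
    and w: "ww n p \<noteq> 0"
    and t1: "tan (pi * (t 1 - 1/2)) = ((ww n p)\<^sup>2 - 1) / (2 * ww n p)"
    and ti: "\<And>i. i \<in> {2..n} \<Longrightarrow> tan (pi * (t i - 1/2)) = uu n p i"
  shows "cube_to_sphere n k t = Fm n p"
proof -
  have a: "aa n p > 0" "aa n p = 4 / (real k)\<^sup>2" using kp k by (auto simp: aa_def)
  have R: "RR n p \<ge> 0" by (simp add: RR_def sum_nonneg)
  have sum: "(\<Sum>i\<in>{1..n}. (tan (pi * (t i - 1/2)))\<^sup>2) =
      (((ww n p)\<^sup>2 - 1) / (2 * ww n p))\<^sup>2 + RR n p"
    unfolding sum_split1[OF n] t1 RR_def by (simp add: ti)
  note da = dbl_alg[OF w a(1) R, folded DD_def sp_def]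
  have S1: "(4 / (real k)\<^sup>2) / (4 / (real k)\<^sup>2 + ((((ww n p)\<^sup>2 - 1) / (2 * ww n p))\<^sup>2 + RR n p)) = sp n p"
    using da(1) unfolding a(2) .
  have S2: "sp n p * (((ww n p)\<^sup>2 - 1) / (2 * ww n p)) = 2 * aa n p * ww n p * ((ww n p)\<^sup>2 - 1) / DD n p"
    using da(2) unfolding da(1) by (simp add: mult.assoc)
  show ?thesis
  proof
    fix i
    show "cube_to_sphere n k t i = Fm n p i"
    proof -
      consider "i = 0" | "i = 1" | "i \<in> {2..n}" | "i \<noteq> 0" "i \<notin> {1..n}" by force
      then show ?thesis
      proof cases
        case 1 then show ?thesis unfolding c2s_eq[OF t] sum S1 Fm_def by (simp add: kp)
      next
        have t1': "tan (pi * (t (Suc 0) - 1/2)) = ((ww n p)\<^sup>2 - 1) / (2 * ww n p)" using t1 by simp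
        case 2 then show ?thesis unfolding c2s_eq[OF t] sum S1 Fm_def using n by (simp add: t1' S2[unfolded times_divide_eq_right])
      next
        case 3 then show ?thesis unfolding c2s_eq[OF t] sum S1 Fm_def by (simp add: ti)
      next
        case 4 then show ?thesis unfolding c2s_eq[OF t] sum S1 Fm_def using n by auto
      qed
    qed
  qed
qed



definition phi :: "nat \<Rightarrow> pt \<Rightarrow> pt" where
  "phi n p = (if 0 < p 0 \<and> p 1 \<le> 0 then Fm n p else hbase)"
definition psi :: "nat \<Rightarrow> pt \<Rightarrow> pt" where
  "psi n p = (if 0 < p 0 \<and> 0 \<le> p 1 then Fm n p else hbase)"

lemma Fm_zero: "ww n p = 0 \<Longrightarrow> Fm n p = hbase"
  by (auto simp: Fm_def sp_def hbase_def)

lemma DD_pos: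
  assumes "kk n p \<noteq> 0"
  shows "DD n p > 0"
proof (cases "ww n p = 0")
  case True then show ?thesis by (simp add: DD_def)
next
  case False
  have a: "aa n p > 0" using assms by (simp add: aa_def)
  have "RR n p \<ge> 0" by (simp add: RR_def sum_nonneg)
  then show ?thesis using a False unfolding DD_def
    by (intro add_pos_nonneg) (auto intro: mult_nonneg_nonneg)
qed

lemma Fm_nonbase:
  assumes "kk n p > 0" "ww n p \<noteq> 0"
  shows "Fm n p \<noteq> hbase"
proof -
  have "Fm n p 0 > 0" using DD_pos[of n p] assms
    by (simp add: Fm_def sp_def aa_def)
  then show ?thesis by (auto simp: hbase_def)
qed

lemma cube_upd:
  assumes "t \<in> open_cube n" "n \<ge> 1" "0 < c" "c < 1"
  shows "t(1 := c) \<in> open_cube n"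
  using assms by (auto simp: open_cube_def)

lemma cube_upd_not:
  assumes "n \<ge> 1"
  shows "t(1 := 1) \<notin> open_cube n"
  using assms by (auto simp: open_cube_def)

lemma phi_base: "phi n hbase = hbase" "psi n hbase = hbase"
  by (auto simp: phi_def psi_def hbase_def)

lemma hconcat_eq:
  assumes n: "n \<ge> 1" and p: "p \<in> hawaiian_earring n"
  shows "hconcat n f g p = (if psi n p = hbase then f (phi n p) else g (psi n p))"
proof (cases "p = hbase")
  case True then show ?thesis by (simp add: hconcat_def phi_base)
next
  case nb: False
  obtain k where k: "k \<ge> 1" and pk: "p \<in> hsphere n k"
    using p by (auto simp: hawaiian_earring_def)
  have p0: "0 < p 0" by (rule hsphere_pos[OF pk k nb])
  have kk: "kk n p = real k" by (rule kk_sphere[OF pk k nb])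
  have kpos: "real k > 0" using k by simp
  define t where "t = tt n (real k) p"
  define w where "w = ww n p"
  have w: "w = 2 * p 1 / (real k * p 0)" by (simp add: w_def ww_def uu_def kk)
  have t1: "t 1 = 1/2 + arctan w / pi" using n by (simp add: t_def tt_def w)
  have tc: "t \<in> open_cube n" by (simp add: t_def tt_cube)
  have ti: "tan (pi * (t i - 1/2)) = uu n p i" if "i \<in> {2..n}" for i
    using that by (simp add: t_def tan_tt uu_def kk)
  have H: "hconcat n f g p = (if t 1 \<le> 1/2 then f (cube_to_sphere n k (t(1 := 2 * t 1)))
               else g (cube_to_sphere n k (t(1 := 2 * t 1 - 1))))"
    unfolding hconcat_def Let_def the_k[OF pk k nb] the_t[OF pk k nb] t_def using nb by simp
  have wsign: "w < 0 \<longleftrightarrow> p 1 < 0" "w = 0 \<longleftrightarrow> p 1 = 0" "0 < w \<longleftrightarrow> 0 < p 1"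
  proof -
    have "real k * p 0 > 0" using p0 kpos by simp
    then show "w < 0 \<longleftrightarrow> p 1 < 0" "w = 0 \<longleftrightarrow> p 1 = 0" "0 < w \<longleftrightarrow> 0 < p 1"
      unfolding w by (auto simp: divide_less_0_iff zero_less_divide_iff)
  qed
  have ab: "- (pi/2) < arctan w" "arctan w < pi/2" by (rule arctan_lbound, rule arctan_ubound)
  consider "p 1 < 0" | "p 1 = 0" | "0 < p 1" by linarith
  then show ?thesis
  proof cases
    case 1
    then have wn: "w < 0" using wsign by simp
    then have at: "arctan w < 0" by simp
    have le: "t 1 \<le> 1/2" unfolding t1 using at by (simp add: divide_nonpos_pos)
    have c: "0 < 2 * t 1" "2 * t 1 < 1" unfolding t1 using ab at by (simp_all add: field_simps)
    have tan1: "tan (pi * ((t(1 := 2 * t 1)) 1 - 1/2)) = (w\<^sup>2 - 1) / (2 * w)"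
    proof -
      have "pi * (2 * t 1 - 1/2) = pi/2 + 2 * arctan w" unfolding t1 by (simp add: field_simps)
      then show ?thesis using tan_double_shift(1)[of w] wn by simp
    qed
    have "cube_to_sphere n k (t(1 := 2 * t 1)) = Fm n p"
      by (rule c2s_mod[OF n cube_upd[OF tc n c] kk k]) (use wn tan1 ti in \<open>auto simp: w_def\<close>)
    moreover have "phi n p = Fm n p" "psi n p = hbase" using 1 p0 by (auto simp: phi_def psi_def)
    ultimately show ?thesis using H le by simp
  next
    case 2
    then have "w = 0" using wsign by simp
    then have e: "t 1 = 1/2" "Fm n p = hbase" using t1 Fm_zero[of n p] by (auto simp: w_def)
    have "cube_to_sphere n k (t(1 := 2 * t 1)) = hbase"
    proof -
      have "2 * t 1 = 1" using e by simp
      then have "t(1 := 2 * t 1) = t(1 := 1)" by (simp only:)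
      then show ?thesis using cube_upd_not[OF n, of t] by (simp add: cube_to_sphere_def)
    qed
    moreover have "phi n p = hbase" "psi n p = hbase" using 2 p0 e by (auto simp: phi_def psi_def)
    ultimately show ?thesis using H e by simp
  next
    case 3
    then have wp: "0 < w" using wsign by simp
    then have at: "0 < arctan w" by simp
    have "arctan w / pi > 0" using at by simp
    then have le: "\<not> t 1 \<le> 1/2" unfolding t1 by linarith
    have c: "0 < 2 * t 1 - 1" "2 * t 1 - 1 < 1" unfolding t1 using ab at by (simp_all add: field_simps)
    have tan1: "tan (pi * ((t(1 := 2 * t 1 - 1)) 1 - 1/2)) = (w\<^sup>2 - 1) / (2 * w)"
    proof -
      have "pi * (2 * t 1 - 1 - 1/2) = 2 * arctan w - pi/2" unfolding t1 by (simp add: field_simps)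
      then show ?thesis using tan_double_shift(2)[of w] wp by simp
    qed
    have "cube_to_sphere n k (t(1 := 2 * t 1 - 1)) = Fm n p"
      by (rule c2s_mod[OF n cube_upd[OF tc n c] kk k]) (use wp tan1 ti in \<open>auto simp: w_def\<close>)
    moreover have "psi n p = Fm n p" "phi n p = hbase" using 3 p0 by (auto simp: phi_def psi_def)
    moreover have "Fm n p \<noteq> hbase" using Fm_nonbase[of n p] kk kpos wp by (simp add: w_def)
    ultimately show ?thesis using H le by simp
  qed
qed



lemma poly_ineq:
  fixes a w R :: real
  assumes a0: "0 < a" and a4: "a \<le> 4" and R: "0 \<le> R"
  shows "a\<^sup>2 * w^4 * (a + w\<^sup>2 + R) \<le> 4 * (4 * a * w\<^sup>2 + 4 * w\<^sup>2 * R + (w\<^sup>2 - 1)\<^sup>2)\<^sup>2"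
proof -
  define X where "X = a * w\<^sup>2"
  define Y where "Y = w\<^sup>2 * R"
  define Z where "Z = (w\<^sup>2 - 1)\<^sup>2"
  define D where "D = 4 * X + 4 * Y + Z"
  have X: "X \<ge> 0" "Y \<ge> 0" "Z \<ge> 0" using a0 R by (simp_all add: X_def Y_def Z_def)
  have D2: "D\<^sup>2 \<ge> 16 * X\<^sup>2" "D\<^sup>2 \<ge> 16 * X * Y" "D\<^sup>2 \<ge> 16 * X * Z"
  proof -
    have "D\<^sup>2 - 16 * X\<^sup>2 = (D - 4*X) * (D + 4*X)" by (simp add: power2_eq_square algebra_simps)
    also have "\<dots> \<ge> 0" using X by (simp add: D_def)
    finally show "D\<^sup>2 \<ge> 16 * X\<^sup>2" by simp
    have "D\<^sup>2 - 16 * X * Y = (4*X - 4*Y)\<^sup>2 + Z * (8*X + 8*Y + Z) + 48 * X * Y"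
      by (simp add: D_def power2_eq_square algebra_simps)
    also have "\<dots> \<ge> 0" using X by (intro add_nonneg_nonneg mult_nonneg_nonneg) auto
    finally show "D\<^sup>2 \<ge> 16 * X * Y" by simp
    have "D\<^sup>2 - 16 * X * Z = (4*X - Z)\<^sup>2 + 4 * Y * (8*X + 4*Y + 2*Z)"
      by (simp add: D_def power2_eq_square algebra_simps)
    also have "\<dots> \<ge> 0" using X by (intro add_nonneg_nonneg mult_nonneg_nonneg) auto
    finally show "D\<^sup>2 \<ge> 16 * X * Z" by simp
  qed
  have t1: "a\<^sup>2 * w^4 * a \<le> 4 * X\<^sup>2"
  proof -
    have "a\<^sup>2 * w^4 * a = a * X\<^sup>2" by (simp add: X_def power2_eq_square power4_eq_xxxx)
    also have "\<dots> \<le> 4 * X\<^sup>2" using a4 by (intro mult_right_mono) auto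
    finally show ?thesis .
  qed
  have t2: "a\<^sup>2 * w^4 * R \<le> 4 * X * Y"
  proof -
    have "a\<^sup>2 * w^4 * R = a * (X * Y)" by (simp add: X_def Y_def power2_eq_square power4_eq_xxxx)
    also have "\<dots> \<le> 4 * (X * Y)" using a4 X by (intro mult_right_mono) auto
    finally show ?thesis by simp
  qed
  have t3: "a\<^sup>2 * w^4 * w\<^sup>2 \<le> 4 * X\<^sup>2 + (64/9) * X * Z"
  proof (cases "w\<^sup>2 \<le> 4")
    case True
    have "a\<^sup>2 * w^4 * w\<^sup>2 = X\<^sup>2 * w\<^sup>2" by (simp add: X_def power2_eq_square power4_eq_xxxx)
    also have "\<dots> \<le> X\<^sup>2 * 4" using True by (intro mult_left_mono) auto
    finally have "a\<^sup>2 * w^4 * w\<^sup>2 \<le> X\<^sup>2 * 4" .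
    moreover have "X * Z \<ge> 0" using X by simp
    ultimately show ?thesis by linarith
  next
    case False
    then have w4: "w\<^sup>2 \<ge> 4" by simp
    have "Z \<ge> (9/16) * (w\<^sup>2)\<^sup>2"
    proof -
      have "w\<^sup>2 - 1 \<ge> (3/4) * w\<^sup>2" using w4 by simp
      moreover have "(3/4) * w\<^sup>2 \<ge> 0" by simp
      ultimately have "(w\<^sup>2 - 1)\<^sup>2 \<ge> ((3/4) * w\<^sup>2)\<^sup>2" by (rule power_mono)
      moreover have "((3/4) * w\<^sup>2)\<^sup>2 = (9/16) * (w\<^sup>2)\<^sup>2" by (simp add: power_mult_distrib power2_eq_square)
      ultimately show ?thesis by (simp add: Z_def)
    qed
    then have wz: "(w\<^sup>2)\<^sup>2 \<le> (16/9) * Z" by simp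
    have "a\<^sup>2 * w^4 * w\<^sup>2 = a * X * (w\<^sup>2)\<^sup>2" by (simp add: X_def power2_eq_square power4_eq_xxxx)
    also have "\<dots> \<le> 4 * X * ((16/9) * Z)"
      using a4 X wz a0 by (intro mult_mono) (auto intro: mult_nonneg_nonneg)
    finally have "a\<^sup>2 * w^4 * w\<^sup>2 \<le> (64/9) * X * Z" by simp
    moreover have "X\<^sup>2 \<ge> 0" by simp
    ultimately show ?thesis by linarith
  qed
  have "a\<^sup>2 * w^4 * (a + w\<^sup>2 + R) = a\<^sup>2 * w^4 * a + a\<^sup>2 * w^4 * w\<^sup>2 + a\<^sup>2 * w^4 * R"
    by (simp add: algebra_simps)
  also have "\<dots> \<le> 8 * X\<^sup>2 + (64/9) * (X * Z) + 4 * (X * Y)" using t1 t2 t3 by (simp add: mult.assoc)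
  also have "\<dots> \<le> 4 * D\<^sup>2"
  proof -
    have l: "\<And>P Q R d :: real. 16 * P \<le> d \<Longrightarrow> 16 * Q \<le> d \<Longrightarrow> 16 * R \<le> d \<Longrightarrow> 0 \<le> d \<Longrightarrow> 8 * P + (64/9) * R + 4 * Q \<le> 4 * d"
      by linarith
    show ?thesis by (rule l) (use D2 in \<open>simp_all add: mult.assoc\<close>)
  qed
  finally show ?thesis by (simp add: D_def X_def Y_def Z_def mult.assoc)
qed

lemma frac_le: "0 \<le> c \<Longrightarrow> c \<le> D \<Longrightarrow> 0 < (D::real) \<Longrightarrow> 0 \<le> M \<Longrightarrow> M * c / D\<^sup>2 \<le> M / D"
  by (simp add: divide_simps power2_eq_square mult_left_mono)

lemma N_identity:
  assumes n: "n \<ge> 1" and p0: "0 < p 0" and N: "Nn n p > 0"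
  shows "Nn n p * (aa n p + (ww n p)\<^sup>2 + RR n p) = (aa n p)\<^sup>2"
proof -
  define N where "N = Nn n p"
  define S where "S = (\<Sum>i\<in>{1..n}. (p i)\<^sup>2)"
  have S: "S = N - (p 0)\<^sup>2" by (simp add: S_def N_def Nn_def sum_split0)
  have u: "uu n p i = p i * N / (p 0)\<^sup>2" for i
    using p0 N by (simp add: uu_def kk_def N_def power2_eq_square field_simps)
  have "(ww n p)\<^sup>2 + RR n p = (\<Sum>i\<in>{1..n}. (uu n p i)\<^sup>2)"
    by (simp only: ww_def RR_def sum_split1[OF n])
  also have "\<dots> = N\<^sup>2 / (p 0)^4 * S"
  proof -
    have "(\<Sum>i\<in>{1..n}. (uu n p i)\<^sup>2) = (\<Sum>i\<in>{1..n}. N\<^sup>2 / (p 0)^4 * (p i)\<^sup>2)"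
      by (intro sum.cong refl) (simp add: u power_divide power_mult_distrib power2_eq_square power4_eq_xxxx mult_ac)
    then show ?thesis by (simp add: S_def sum_distrib_left)
  qed
  finally have wr: "(ww n p)\<^sup>2 + RR n p = N\<^sup>2 / (p 0)^4 * (N - (p 0)\<^sup>2)" by (simp add: S)
  have a: "aa n p = N\<^sup>2 / (p 0)\<^sup>2"
    using p0 N by (simp add: aa_def kk_def N_def power_divide field_simps)
  show ?thesis
    unfolding N_def[symmetric] add.assoc wr a using p0 N
    by (simp add: N_def field_simps power2_eq_square power4_eq_xxxx)
qed

lemma Fm_sq_bound:
  assumes D: "DD n p > 0" and a: "aa n p > 0"
  shows "(Fm n p j)\<^sup>2 \<le> 4 * (aa n p)\<^sup>2 * (ww n p)\<^sup>2 / DD n p"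
proof -
  define a where "a = aa n p"
  define w where "w = ww n p"
  define D where "D = DD n p"
  have R: "RR n p \<ge> 0" by (simp add: RR_def sum_nonneg)
  have Dd: "D = 4 * a * w\<^sup>2 + 4 * w\<^sup>2 * RR n p + (w\<^sup>2 - 1)\<^sup>2" by (simp add: D_def DD_def a_def w_def)
  have M: "0 \<le> 4 * a\<^sup>2 * w\<^sup>2" by simp
  have Dp: "D > 0" using D by (simp add: D_def)
  have sp: "sp n p = 4 * a * w\<^sup>2 / D" by (simp add: sp_def a_def w_def D_def)
  have kk2: "4 / (kk n p)\<^sup>2 = a" by (simp add: a_def aa_def)
  consider "j = 0" | "j = 1" | "j \<in> {2..n}" | "j \<noteq> 0" "j \<noteq> 1" "j \<notin> {2..n}" by blast
  then have "(Fm n p j)\<^sup>2 \<le> 4 * a\<^sup>2 * w\<^sup>2 / D"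
  proof cases
    case 1
    have "(Fm n p j)\<^sup>2 = (sp n p)\<^sup>2 * (4 / (kk n p)\<^sup>2)"
      using 1 by (simp add: Fm_def power_mult_distrib power_divide)
    also have "\<dots> = 4 * a\<^sup>2 * w\<^sup>2 * (4 * a * w\<^sup>2) / D\<^sup>2"
      unfolding kk2 sp by (simp add: power_divide power_mult_distrib power2_eq_square)
    also have "\<dots> \<le> 4 * a\<^sup>2 * w\<^sup>2 / D"
      using a R by (intro frac_le[OF _ _ Dp M]) (auto simp: Dd a_def)
    finally show ?thesis .
  next
    case 2
    have "(Fm n p j)\<^sup>2 = 4 * a\<^sup>2 * w\<^sup>2 * (w\<^sup>2 - 1)\<^sup>2 / D\<^sup>2"
      using 2 by (simp add: Fm_def a_def w_def D_def power_divide power_mult_distrib power2_eq_square)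
    also have "\<dots> \<le> 4 * a\<^sup>2 * w\<^sup>2 / D"
      using a R by (intro frac_le[OF _ _ Dp M]) (auto simp: Dd a_def)
    finally show ?thesis .
  next
    case 3
    have uj: "(uu n p j)\<^sup>2 \<le> RR n p"
      unfolding RR_def using 3 by (intro member_le_sum) auto
    have "(Fm n p j)\<^sup>2 = 4 * a\<^sup>2 * w\<^sup>2 * (4 * w\<^sup>2 * (uu n p j)\<^sup>2) / D\<^sup>2"
      using 3 unfolding Fm_def sp by (simp add: power_divide power_mult_distrib power2_eq_square)
    also have "\<dots> \<le> 4 * a\<^sup>2 * w\<^sup>2 / D"
    proof (intro frac_le[OF _ _ Dp M])
      have "4 * w\<^sup>2 * (uu n p j)\<^sup>2 \<le> 4 * w\<^sup>2 * RR n p" using uj by (intro mult_left_mono) auto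
      moreover have "0 \<le> 4 * a * w\<^sup>2" "0 \<le> (w\<^sup>2 - 1)\<^sup>2" using a by (simp_all add: a_def)
      ultimately show "4 * w\<^sup>2 * (uu n p j)\<^sup>2 \<le> D" unfolding Dd by linarith
    qed simp
    finally show ?thesis .
  next
    case 4
    then have "Fm n p j = 0" by (simp add: Fm_def)
    then show ?thesis using Dp by simp
  qed
  then show ?thesis by (simp add: a_def w_def D_def)
qed

lemma Fm_bound:
  assumes n: "n \<ge> 1" and p: "p \<in> hsphere n k" and k: "k \<ge> 1" and nb: "p \<noteq> hbase"
  shows "(Fm n p j)^4 \<le> 64 * Nn n p"
proof -
  have p0: "0 < p 0" by (rule hsphere_pos[OF p k nb])
  have N: "Nn n p = 2 * p 0 / real k" by (rule hsphere_N[OF p k])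
  have Np: "Nn n p > 0" using N p0 k by simp
  have kk: "kk n p = real k" by (rule kk_sphere[OF p k nb])
  define a where "a = aa n p"
  define w where "w = ww n p"
  define D where "D = DD n p"
  define R where "R = RR n p"
  have a0: "a > 0" and a4: "a \<le> 4" using k by (auto simp: a_def aa_def kk field_simps)
  have R: "R \<ge> 0" by (simp add: R_def RR_def sum_nonneg)
  have Dp: "D > 0" using DD_pos[of n p] kk k by (simp add: D_def)
  have Dd: "D = 4 * a * w\<^sup>2 + 4 * w\<^sup>2 * R + (w\<^sup>2 - 1)\<^sup>2" by (simp add: D_def DD_def a_def w_def R_def)
  have id: "Nn n p * (a + w\<^sup>2 + R) = a\<^sup>2" using N_identity[OF n p0 Np] by (simp add: a_def w_def R_def)
  have q: "a + w\<^sup>2 + R > 0" using a0 R by (simp add: add_pos_nonneg)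
  have Nn: "Nn n p = a\<^sup>2 / (a + w\<^sup>2 + R)" using id q by (simp add: field_simps)
  have f2: "(Fm n p j)\<^sup>2 \<le> 4 * a\<^sup>2 * w\<^sup>2 / D"
    using Fm_sq_bound[of n p j] Dp a0 by (simp add: a_def w_def D_def)
  have "(Fm n p j)^4 = ((Fm n p j)\<^sup>2)\<^sup>2" by simp
  also have "\<dots> \<le> (4 * a\<^sup>2 * w\<^sup>2 / D)\<^sup>2" using f2 by (intro power_mono) auto
  also have "\<dots> \<le> 64 * (a\<^sup>2 / (a + w\<^sup>2 + R))"
  proof -
    have pi: "a\<^sup>2 * w^4 * (a + w\<^sup>2 + R) \<le> 4 * D\<^sup>2" using poly_ineq[OF a0 a4 R, of w] by (simp add: Dd)
    have "(4 * a\<^sup>2 * w\<^sup>2 / D)\<^sup>2 = 16 * a\<^sup>2 * (a\<^sup>2 * w^4) / D\<^sup>2"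
      by (simp add: power_divide power_mult_distrib power2_eq_square power4_eq_xxxx)
    also have "\<dots> \<le> 64 * (a\<^sup>2 / (a + w\<^sup>2 + R))"
      using pi q Dp a0 by (simp add: divide_simps)
    finally show ?thesis .
  qed
  finally show ?thesis by (simp add: Nn)
qed



lemma cont_coord [continuous_intros]: "continuous_on S (\<lambda>x::pt. x i)"
  by (rule continuous_on_subset[OF continuous_on_product_coordinates]) simp

lemma Nn_fun: "Nn n = (\<lambda>p. \<Sum>i\<in>{0..n}. (p i)\<^sup>2)"
  by (rule ext) (simp add: Nn_def)

lemma cont_Nn: "continuous_on S (Nn n)"
  unfolding Nn_fun by (intro continuous_intros)

lemma Nn_pos: "0 < p 0 \<Longrightarrow> 0 < Nn n p"
proof -
  assume p0: "0 < p 0"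
  have "(p 0)\<^sup>2 \<le> Nn n p" unfolding Nn_def
    by (rule member_le_sum[where f="\<lambda>i. (p i)\<^sup>2" and i=0]) auto
  moreover have "(p 0)\<^sup>2 > 0" using p0 by simp
  ultimately show ?thesis by linarith
qed

lemma kk_pos: "0 < p 0 \<Longrightarrow> 0 < kk n p"
  using Nn_pos[of p n] by (simp add: kk_def)

definition "PosS = {p::pt. 0 < p 0}"

lemma Nn_nz: "x \<in> PosS \<Longrightarrow> Nn n x \<noteq> 0"
  using Nn_pos[of x n] by (simp add: PosS_def)

lemma kk_nz: "x \<in> PosS \<Longrightarrow> kk n x \<noteq> 0"
  using kk_pos[of x n] by (simp add: PosS_def)

lemma kkp_nz: "x \<in> PosS \<Longrightarrow> kk n x * x 0 \<noteq> 0"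
  using kk_pos[of x n] by (simp add: PosS_def)

lemma cont_kk: "continuous_on PosS (kk n)"
  unfolding kk_def[abs_def] by (intro continuous_intros cont_Nn) (auto simp: Nn_nz)

lemma cont_uu: "continuous_on PosS (\<lambda>p. uu n p i)"
  unfolding uu_def by (intro continuous_intros cont_kk) (auto simp: kk_nz PosS_def)

lemma cont_ww: "continuous_on PosS (ww n)"
  unfolding ww_def[abs_def] by (rule cont_uu)

lemma cont_RR: "continuous_on PosS (RR n)"
  unfolding RR_def[abs_def] by (intro continuous_intros cont_uu)

lemma cont_aa: "continuous_on PosS (aa n)"
  unfolding aa_def[abs_def]
  by (intro continuous_intros cont_kk) (auto simp: kk_nz)

lemma cont_DD: "continuous_on PosS (DD n)"
  unfolding DD_def[abs_def] by (intro continuous_intros cont_aa cont_ww cont_RR)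

lemma DD_nz: "p \<in> PosS \<Longrightarrow> DD n p \<noteq> 0"
  using DD_pos[of n p] kk_pos[of p n] by (simp add: PosS_def)

lemma cont_sp: "continuous_on PosS (sp n)"
  unfolding sp_def[abs_def] using DD_nz
  by (intro continuous_intros cont_aa cont_ww cont_DD) auto

lemma cont_Fm: "continuous_on PosS (\<lambda>p. Fm n p j)"
proof -
  consider "j = 0" | "j = 1" | "j \<noteq> 0" "j \<noteq> 1" "j \<in> {2..n}" | "j \<noteq> 0" "j \<noteq> 1" "j \<notin> {2..n}" by blast
  then show ?thesis
  proof cases
    case 1 then show ?thesis unfolding Fm_def
      by simp (intro continuous_intros cont_sp cont_kk, auto simp: kk_nz)
  next
    case 2 then show ?thesis unfolding Fm_def using DD_nz
      by simp (intro continuous_intros cont_aa cont_ww cont_DD, auto)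
  next
    case 3 then show ?thesis unfolding Fm_def
      by simp (intro continuous_intros cont_sp cont_uu)
  next
    case 4 then show ?thesis unfolding Fm_def by simp
  qed
qed



lemma open_PosS: "open PosS"
  unfolding PosS_def using open_Collect_less[of "\<lambda>p::pt. 0" "\<lambda>p. p 0"] by simp

lemma cont_glue:
  fixes h g :: "pt \<Rightarrow> real"
  assumes c1: "continuous_on (S \<inter> PosS) h"
    and hb: "h hbase = 0"
    and bd: "\<And>p. p \<in> S \<Longrightarrow> \<bar>h p\<bar> \<le> g p"
    and gc: "continuous_on UNIV g" and g0: "g hbase = 0"
    and pos: "\<And>p. p \<in> S \<Longrightarrow> p \<noteq> hbase \<Longrightarrow> p \<in> PosS"
  shows "continuous_on S h"
  unfolding continuous_on_eq_continuous_within
proof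
  fix x assume x: "x \<in> S"
  show "continuous (at x within S) h"
  proof (cases "x = hbase")
    case True
    have ev: "eventually (\<lambda>p. norm (h p) \<le> g p) (at hbase within S)"
      unfolding eventually_at_filter using bd by (auto intro: always_eventually)
    have "isCont g hbase" using gc continuous_on_eq_continuous_at by blast
    then have "(g \<longlongrightarrow> 0) (at hbase within S)"
      using g0 continuous_at_imp_continuous_at_within continuous_within by metis
    with ev have "(h \<longlongrightarrow> 0) (at hbase within S)" by (rule Lim_null_comparison)
    then show ?thesis using True hb by (simp add: continuous_within)
  next
    case False
    then have xP: "x \<in> PosS" using pos x by blast
    have eq: "at x within S = at x within (S \<inter> PosS)"
      by (rule at_within_nhd[OF xP open_PosS]) auto
    have "continuous (at x within (S \<inter> PosS)) h"
      using c1 xP x continuous_on_eq_continuous_within by blast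
    then show ?thesis by (simp add: eq)
  qed
qed

lemma abs_le_4root:
  fixes x y :: real
  assumes "x^4 \<le> y"
  shows "\<bar>x\<bar> \<le> sqrt (sqrt y)"
proof -
  have "sqrt (sqrt (x^4)) = \<bar>x\<bar>"
  proof -
    have "x^4 = (x\<^sup>2)\<^sup>2" by (simp add: power4_eq_xxxx power2_eq_square)
    then have "sqrt (x^4) = x\<^sup>2" using real_sqrt_abs[of "x\<^sup>2"] by simp
    then show ?thesis by simp
  qed
  moreover have "sqrt (sqrt (x^4)) \<le> sqrt (sqrt y)" using assms by simp
  ultimately show ?thesis by simp
qed

lemma HE_pos: "p \<in> hawaiian_earring n \<Longrightarrow> p \<noteq> hbase \<Longrightarrow> p \<in> PosS"
  by (auto simp: hawaiian_earring_def PosS_def intro: hsphere_pos)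

lemma Fm_bound_HE:
  assumes "n \<ge> 1" "p \<in> hawaiian_earring n" "p \<noteq> hbase"
  shows "\<bar>Fm n p j\<bar> \<le> sqrt (sqrt (64 * Nn n p))"
proof -
  obtain k where "k \<ge> 1" "p \<in> hsphere n k" using assms(2) by (auto simp: hawaiian_earring_def)
  then show ?thesis using Fm_bound[OF assms(1) _ _ assms(3)] abs_le_4root by blast
qed

lemma hbase_HE: "hbase \<in> hawaiian_earring n"
  using hbase_in_hsphere[of n 1] by (auto simp: hawaiian_earring_def)

lemma Nn_hbase: "Nn n hbase = 0"
  by (simp add: Nn_def hbase_def)

lemma phi_base_j: "phi n hbase j = 0" "psi n hbase j = 0"
  by (simp_all add: phi_base) (simp_all add: hbase_def)

lemma Fm_w0: "p 1 = 0 \<Longrightarrow> Fm n p j = 0"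
  using Fm_zero[of n p] by (simp add: ww_def uu_def hbase_def)

lemma cont_phi_coord:
  assumes n: "n \<ge> 1"
  shows "continuous_on (hawaiian_earring n) (\<lambda>p. phi n p j)"
    "continuous_on (hawaiian_earring n) (\<lambda>p. psi n p j)"
proof -
  let ?H = "hawaiian_earring n"
  have gc: "continuous_on UNIV (\<lambda>p. sqrt (sqrt (64 * Nn n p)))"
    by (intro continuous_intros cont_Nn)
  have FmH: "continuous_on {x \<in> ?H \<inter> PosS. Q x} (\<lambda>p. Fm n p j)" for Q
    by (rule continuous_on_subset[OF cont_Fm]) auto
  have c1: "continuous_on (?H \<inter> PosS) (\<lambda>p. phi n p j)"
  proof -
    have "continuous_on (?H \<inter> PosS) (\<lambda>p. if p 1 \<le> 0 then Fm n p j else 0)"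
      by (rule continuous_on_cases_le[OF FmH continuous_on_const]) (auto intro: continuous_intros Fm_w0)
    then show ?thesis
      by (rule continuous_on_eq) (auto simp: phi_def PosS_def hbase_def)
  qed
  have c2: "continuous_on (?H \<inter> PosS) (\<lambda>p. psi n p j)"
  proof -
    have "continuous_on (?H \<inter> PosS) (\<lambda>p. if - p 1 \<le> 0 then Fm n p j else 0)"
      by (rule continuous_on_cases_le[OF FmH continuous_on_const]) (auto intro: continuous_intros Fm_w0)
    then show ?thesis
      by (rule continuous_on_eq) (auto simp: psi_def PosS_def hbase_def)
  qed
  have bd: "\<bar>phi n p j\<bar> \<le> sqrt (sqrt (64 * Nn n p))" "\<bar>psi n p j\<bar> \<le> sqrt (sqrt (64 * Nn n p))"
    if "p \<in> ?H" for p
  proof -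
    have "p \<noteq> hbase" if "0 < p 0" using that by (auto simp: hbase_def)
    moreover have "0 \<le> Nn n p" by (simp add: Nn_def sum_nonneg)
    ultimately show "\<bar>phi n p j\<bar> \<le> sqrt (sqrt (64 * Nn n p))" "\<bar>psi n p j\<bar> \<le> sqrt (sqrt (64 * Nn n p))"
      using Fm_bound_HE[OF n \<open>p \<in> ?H\<close>] by (auto simp: phi_def psi_def hbase_def)
  qed
  show "continuous_on ?H (\<lambda>p. phi n p j)"
    by (rule cont_glue[OF c1 _ bd(1) gc]) (auto simp: phi_base_j Nn_hbase intro: HE_pos)
  show "continuous_on ?H (\<lambda>p. psi n p j)"
    by (rule cont_glue[OF c2 _ bd(2) gc]) (auto simp: phi_base_j Nn_hbase intro: HE_pos)
qed



lemma hconcat_id_HE: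
  assumes n: "n \<ge> 1" and p: "p \<in> hawaiian_earring n"
  shows "hconcat n (\<lambda>q. q) (\<lambda>q. q) p \<in> hawaiian_earring n"
proof (cases "p = hbase")
  case True then show ?thesis by (simp add: hconcat_def hbase_HE)
next
  case False
  obtain k where k: "k \<ge> 1" "p \<in> hsphere n k" using p by (auto simp: hawaiian_earring_def)
  have "cube_to_sphere n k t \<in> hawaiian_earring n" for t
    using c2s_in[OF k(1)] k(1) by (auto simp: hawaiian_earring_def)
  then show ?thesis
    unfolding hconcat_def Let_def the_k[OF k(2) k(1) False] using False by simp
qed

lemma phi_or_psi: "phi n p = hbase \<or> psi n p = hbase"
proof -
  have "p 1 = 0 \<Longrightarrow> Fm n p = hbase" using Fm_zero[of n p] by (simp add: ww_def uu_def)
  then show ?thesis by (auto simp: phi_def psi_def)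
qed

lemma phi_HE:
  assumes n: "n \<ge> 1" and p: "p \<in> hawaiian_earring n"
  shows "phi n p \<in> hawaiian_earring n" "psi n p \<in> hawaiian_earring n"
  using hconcat_id_HE[OF n p] hconcat_eq[OF n p, of "\<lambda>q. q" "\<lambda>q. q"] phi_or_psi[of n p] hbase_HE
  by (auto split: if_splits)

lemma phi_cont_map:
  assumes n: "n \<ge> 1"
  shows "continuous_map (HE n) (HE n) (phi n)" "continuous_map (HE n) (HE n) (psi n)"
proof -
  have "continuous_on (hawaiian_earring n) (phi n)" "continuous_on (hawaiian_earring n) (psi n)"
    using cont_phi_coord[OF n] by (auto intro: continuous_on_coordinatewise_then_product)
  then show "continuous_map (HE n) (HE n) (phi n)" "continuous_map (HE n) (HE n) (psi n)"
    unfolding HE_def continuous_map_in_subtopology using phi_HE[OF n] by auto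
qed

lemma closed_base_HE: "closedin (HE n) {hbase}"
proof -
  have "closedin (HE n) (hawaiian_earring n \<inter> {hbase})"
    unfolding HE_def by (rule closedin_closed_Int) simp
  then show ?thesis using hbase_HE[of n] by (simp add: Int_absorb1)
qed

lemma concat_cont:
  assumes n: "n \<ge> 1"
    and F: "continuous_map (prod_topology T (HE n)) Y F"
    and G: "continuous_map (prod_topology T (HE n)) Y G"
    and FG: "\<And>t. t \<in> topspace T \<Longrightarrow> F (t, hbase) = y0 \<and> G (t, hbase) = y0"
  shows "continuous_map (prod_topology T (HE n)) Y
           (\<lambda>z. hconcat n (\<lambda>q. F (fst z, q)) (\<lambda>q. G (fst z, q)) (snd z))"
proof -
  let ?Z = "prod_topology T (HE n)"
  define A where "A = (\<lambda>b. if b then {z \<in> topspace ?Z. psi n (snd z) \<in> {hbase}}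
                                else {z \<in> topspace ?Z. phi n (snd z) \<in> {hbase}})"
  define f where "f = (\<lambda>b. if b then (\<lambda>z. F (fst z, phi n (snd z))) else (\<lambda>z. G (fst z, psi n (snd z))))"
  have cphi: "continuous_map ?Z ?Z (\<lambda>z. (fst z, phi n (snd z)))"
    "continuous_map ?Z ?Z (\<lambda>z. (fst z, psi n (snd z)))"
    using phi_cont_map[OF n]
    by (auto intro!: continuous_map_pairedI continuous_map_fst continuous_map_compose[OF continuous_map_snd, unfolded o_def])
  have csnd: "continuous_map ?Z (HE n) (\<lambda>z. phi n (snd z))" "continuous_map ?Z (HE n) (\<lambda>z. psi n (snd z))"
    using phi_cont_map[OF n] by (auto intro: continuous_map_compose[OF continuous_map_snd, unfolded o_def])
  obtain g where g: "continuous_map ?Z Y g"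
    "\<And>x i. i \<in> {True, False} \<Longrightarrow> x \<in> topspace ?Z \<inter> A i \<Longrightarrow> g x = f i x"
  proof (rule pasting_lemma_exists_closed[of "{True, False}" ?Z A Y f])
    show "topspace ?Z \<subseteq> \<Union> (A ` {True, False})"
      using phi_or_psi by (auto simp: A_def)
    show "closedin ?Z (A i)" for i
      unfolding A_def using closedin_continuous_map_preimage[OF csnd(1) closed_base_HE]
        closedin_continuous_map_preimage[OF csnd(2) closed_base_HE] by auto
    show "continuous_map (subtopology ?Z (A i)) Y (f i)" for i
      unfolding f_def using continuous_map_compose[OF cphi(1) F] continuous_map_compose[OF cphi(2) G]
      by (auto intro: continuous_map_from_subtopology simp: o_def)
    show "f i x = f j x" if "i \<in> {True, False}" "j \<in> {True, False}" "x \<in> topspace ?Z \<inter> A i \<inter> A j" for i j x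
    proof -
      have "fst x \<in> topspace T" using that by (auto simp: A_def)
      then show ?thesis using that FG by (auto simp: A_def f_def)
    qed
  qed auto
  show ?thesis
  proof (rule continuous_map_eq[OF g(1)])
    fix z assume z: "z \<in> topspace ?Z"
    then have p: "snd z \<in> hawaiian_earring n" by (auto simp: HE_def)
    show "g z = hconcat n (\<lambda>q. F (fst z, q)) (\<lambda>q. G (fst z, q)) (snd z)"
      unfolding hconcat_eq[OF n p]
    proof (cases "psi n (snd z) = hbase")
      case True
      then show "g z = (if psi n (snd z) = hbase then F (fst z, phi n (snd z)) else G (fst z, psi n (snd z)))"
        using g(2)[of True z] z by (simp add: A_def f_def)
    next
      case False
      then have "phi n (snd z) = hbase" using phi_or_psi by blast
      then show "g z = (if psi n (snd z) = hbase then F (fst z, phi n (snd z)) else G (fst z, psi n (snd z)))"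
        using g(2)[of False z] z False by (simp add: A_def f_def)
    qed
  qed
qed



lemma hconcat_base: "hconcat n f g hbase = f hbase"
  by (simp add: hconcat_def)

lemma hconcat_homotopic:
  assumes n: "n \<ge> 1"
    and ha: "homotopic_with (\<lambda>h. h hbase = y0) (HE n) Y a a'"
    and hb: "homotopic_with (\<lambda>h. h hbase = y0) (HE n) Y b b'"
  shows "homotopic_with (\<lambda>h. h hbase = y0) (HE n) Y (hconcat n a b) (hconcat n a' b')"
proof -
  obtain Ha where Ha: "continuous_map (prod_topology (top_of_set {0..1::real}) (HE n)) Y Ha"
    "\<And>x. Ha (0, x) = a x" "\<And>x. Ha (1, x) = a' x" "\<And>t::real. t \<in> {0..1} \<Longrightarrow> Ha (t, hbase) = y0"
    using ha unfolding homotopic_with_def by blast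
  obtain Hb where Hb: "continuous_map (prod_topology (top_of_set {0..1::real}) (HE n)) Y Hb"
    "\<And>x. Hb (0, x) = b x" "\<And>x. Hb (1, x) = b' x" "\<And>t::real. t \<in> {0..1} \<Longrightarrow> Hb (t, hbase) = y0"
    using hb unfolding homotopic_with_def by blast
  have a0: "(\<lambda>q. Ha (0, q)) = a" "(\<lambda>q. Ha (1, q)) = a'" using Ha by auto
  have b0: "(\<lambda>q. Hb (0, q)) = b" "(\<lambda>q. Hb (1, q)) = b'" using Hb by auto
  show ?thesis
    unfolding homotopic_with_def
    apply (rule exI[where x="\<lambda>z. hconcat n (\<lambda>q. Ha (fst z, q)) (\<lambda>q. Hb (fst z, q)) (snd z)"])
    using concat_cont[OF n Ha(1) Hb(1)] Ha(4) Hb(4)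
    by (auto simp: a0 b0 hconcat_base)
qed

lemma hclass_refl: "f \<in> hmaps n X x0 \<Longrightarrow> f \<in> hclass n X x0 f"
  by (simp add: hclass_def hmaps_def)

lemma hclass_eq:
  assumes "homotopic_with (\<lambda>h. h hbase = x0) (HE n) X f g"
  shows "hclass n X x0 f = hclass n X x0 g"
  using assms unfolding hclass_def
  by (auto intro: homotopic_with_trans homotopic_with_symD)

lemma hclass_eq_iff:
  assumes "f \<in> hmaps n X x0" "g \<in> hmaps n X x0"
  shows "hclass n X x0 f = hclass n X x0 g \<longleftrightarrow> homotopic_with (\<lambda>h. h hbase = x0) (HE n) X f g"
proof
  assume "hclass n X x0 f = hclass n X x0 g"
  then have "g \<in> hclass n X x0 f" using hclass_refl[OF assms(2)] by simp
  then show "homotopic_with (\<lambda>h. h hbase = x0) (HE n) X f g" by (simp add: hclass_def)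
qed (rule hclass_eq)

lemma some_hclass:
  assumes "f \<in> hmaps n X x0"
  shows "(SOME g. g \<in> hclass n X x0 f) \<in> hmaps n X x0"
    "homotopic_with (\<lambda>h. h hbase = x0) (HE n) X f (SOME g. g \<in> hclass n X x0 f)"
    "hclass n X x0 (SOME g. g \<in> hclass n X x0 f) = hclass n X x0 f"
proof -
  have "(SOME g. g \<in> hclass n X x0 f) \<in> hclass n X x0 f"
    using hclass_refl[OF assms] by (metis someI)
  then show "(SOME g. g \<in> hclass n X x0 f) \<in> hmaps n X x0"
    "homotopic_with (\<lambda>h. h hbase = x0) (HE n) X f (SOME g. g \<in> hclass n X x0 f)"
    by (auto simp: hclass_def)
  then show "hclass n X x0 (SOME g. g \<in> hclass n X x0 f) = hclass n X x0 f"
    by (metis hclass_eq homotopic_with_symD)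
qed

lemma mult_hclass:
  assumes n: "n \<ge> 1" and f: "f \<in> hmaps n X x0" and g: "g \<in> hmaps n X x0"
  shows "monoid.mult (hawaiian_group n X x0) (hclass n X x0 f) (hclass n X x0 g)
         = hclass n X x0 (hconcat n f g)"
    "hconcat n f g \<in> hmaps n X x0"
proof -
  have h: "homotopic_with (\<lambda>h. h hbase = x0) (HE n) X (hconcat n f g)
     (hconcat n (SOME f'. f' \<in> hclass n X x0 f) (SOME g'. g' \<in> hclass n X x0 g))"
    by (rule hconcat_homotopic[OF n some_hclass(2)[OF f] some_hclass(2)[OF g]])
  then show "monoid.mult (hawaiian_group n X x0) (hclass n X x0 f) (hclass n X x0 g)
         = hclass n X x0 (hconcat n f g)"
    by (simp add: hawaiian_group_def hclass_eq)
  show "hconcat n f g \<in> hmaps n X x0"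
    using homotopic_with_imp_continuous_maps[OF h] homotopic_with_imp_property[OF h]
    by (simp add: hmaps_def)
qed


lemma hmaps_prod_iff:
  "f \<in> hmaps n (product_topology X I) (restrict x I) \<longleftrightarrow>
     (\<forall>p\<in>hawaiian_earring n. f p \<in> extensional I) \<and>
     (\<forall>i\<in>I. continuous_map (HE n) (X i) (\<lambda>p. f p i)) \<and> f hbase = restrict x I"
  by (auto simp: hmaps_def continuous_map_componentwise HE_def)

lemma hmaps_prod_proj:
  assumes "f \<in> hmaps n (product_topology X I) (restrict x I)" "i \<in> I"
  shows "(\<lambda>p. f p i) \<in> hmaps n (X i) (x i)"
  using assms by (auto simp: hmaps_prod_iff hmaps_def)

lemma proj_homotopic:
  assumes "homotopic_with (\<lambda>h. h hbase = restrict x I) (HE n) (product_topology X I) f g" "i \<in> I"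
  shows "homotopic_with (\<lambda>h. h hbase = x i) (HE n) (X i) (\<lambda>p. f p i) (\<lambda>p. g p i)"
proof -
  have "homotopic_with (\<lambda>h. h hbase = x i) (HE n) (X i) ((\<lambda>y. y i) \<circ> f) ((\<lambda>y. y i) \<circ> g)"
    by (rule homotopic_with_compose_continuous_map_left[OF assms(1)
          continuous_map_product_projection[OF assms(2)]]) (use assms(2) in auto)
  then show ?thesis by (simp add: o_def)
qed

lemma prod_homotopic:
  assumes f: "f \<in> hmaps n (product_topology X I) (restrict x I)"
    and g: "g \<in> hmaps n (product_topology X I) (restrict x I)"
    and h: "\<forall>i\<in>I. homotopic_with (\<lambda>h. h hbase = x i) (HE n) (X i) (\<lambda>p. f p i) (\<lambda>p. g p i)"
  shows "homotopic_with (\<lambda>h. h hbase = restrict x I) (HE n) (product_topology X I) f g"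
proof -
  from h have "\<forall>i\<in>I. \<exists>H. continuous_map (prod_topology (top_of_set {0..1::real}) (HE n)) (X i) H \<and>
      (\<forall>p. H (0, p) = f p i) \<and> (\<forall>p. H (1, p) = g p i) \<and> (\<forall>t\<in>{0..1}. H (t, hbase) = x i)"
    unfolding homotopic_with_def by blast
  then obtain H where H: "\<And>i. i \<in> I \<Longrightarrow> continuous_map (prod_topology (top_of_set {0..1::real}) (HE n)) (X i) (H i)"
    "\<And>i p. i \<in> I \<Longrightarrow> H i (0, p) = f p i" "\<And>i p. i \<in> I \<Longrightarrow> H i (1, p) = g p i"
    "\<And>i t. i \<in> I \<Longrightarrow> t \<in> {0..1} \<Longrightarrow> H i (t, hbase) = x i"
    by metis
  define K where "K = (\<lambda>z::real \<times> pt. if fst z = 0 then f (snd z) else if fst z = 1 then g (snd z)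
                         else (\<lambda>i\<in>I. H i z))"
  have fe: "f p \<in> extensional I" "g p \<in> extensional I" if "p \<in> hawaiian_earring n" for p
    using f g that by (auto simp: hmaps_prod_iff)
  have c: "continuous_map (prod_topology (top_of_set {0..1::real}) (HE n)) (product_topology X I) (\<lambda>z. \<lambda>i\<in>I. H i z)"
    using H(1) by (auto simp: continuous_map_componentwise)
  have "continuous_map (prod_topology (top_of_set {0..1::real}) (HE n)) (product_topology X I) K"
  proof (rule continuous_map_eq[OF c])
    fix z assume z: "z \<in> topspace (prod_topology (top_of_set {0..1::real}) (HE n))"
    then have p: "snd z \<in> hawaiian_earring n" by (auto simp: HE_def)
    show "(\<lambda>i\<in>I. H i z) = K z"
      unfolding K_def
    proof (cases z)
      case (Pair t p)
      show "(\<lambda>i\<in>I. H i z) = (if fst z = 0 then f (snd z) else if fst z = 1 then g (snd z) else (\<lambda>i\<in>I. H i z))"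
        using fe[OF p] H(2,3) by (auto simp: Pair fun_eq_iff extensional_def)
    qed
  qed
  moreover have "\<forall>t\<in>{0..1::real}. K (t, hbase) = restrict x I"
    using f g H(4) by (auto simp: K_def hmaps_def)
  ultimately show ?thesis
    unfolding homotopic_with_def
    by (intro exI[where x=K]) (auto simp: K_def)
qed

lemma hconcat_proj: "(\<lambda>p. hconcat n f g p i) = hconcat n (\<lambda>p. f p i) (\<lambda>p. g p i)"
  by (auto simp: hconcat_def Let_def)

theorem theorem2p12:
  fixes X :: "'i \<Rightarrow> 'a topology" and x :: "'i \<Rightarrow> 'a" and I :: "'i set" and n :: nat
  assumes "n \<ge> 1"
    and "\<forall>i\<in>I. x i \<in> topspace (X i)"
  shows "hawaiian_group n (product_topology X I) (restrict x I)
           \<cong> product_group I (\<lambda>i. hawaiian_group n (X i) (x i))"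
proof -
  let ?P = "product_topology X I" and ?xs = "restrict x I"
  let ?G = "hawaiian_group n ?P ?xs"
  let ?H = "product_group I (\<lambda>i. hawaiian_group n (X i) (x i))"
  define \<Phi> where "\<Phi> = (\<lambda>A. \<lambda>i\<in>I. hclass n (X i) (x i) (\<lambda>p. (SOME f. f \<in> A) p i))"
  have cG: "carrier ?G = hclass n ?P ?xs ` hmaps n ?P ?xs" by (simp add: hawaiian_group_def)
  have cH: "carrier ?H = (\<Pi>\<^sub>E i\<in>I. hclass n (X i) (x i) ` hmaps n (X i) (x i))"
    by (simp add: hawaiian_group_def)
  have \<Phi>cl: "\<Phi> (hclass n ?P ?xs f) = (\<lambda>i\<in>I. hclass n (X i) (x i) (\<lambda>p. f p i))"
    if f: "f \<in> hmaps n ?P ?xs" for f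
  proof -
    have "hclass n (X i) (x i) (\<lambda>p. (SOME g. g \<in> hclass n ?P ?xs f) p i) = hclass n (X i) (x i) (\<lambda>p. f p i)"
      if i: "i \<in> I" for i
      by (rule hclass_eq[OF homotopic_with_symD[OF proj_homotopic[OF some_hclass(2)[OF f] i]]])
    then show ?thesis unfolding \<Phi>_def by (intro restrict_ext) simp
  qed
  have hom: "\<Phi> \<in> hom ?G ?H"
  proof (rule homI)
    fix A assume "A \<in> carrier ?G"
    then obtain f where f: "f \<in> hmaps n ?P ?xs" and A: "A = hclass n ?P ?xs f" using cG by auto
    show "\<Phi> A \<in> carrier ?H"
      using hmaps_prod_proj[OF f] by (auto simp: A \<Phi>cl[OF f] hawaiian_group_def)
  next
    fix A B assume "A \<in> carrier ?G" "B \<in> carrier ?G"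
    then obtain f g where f: "f \<in> hmaps n ?P ?xs" and A: "A = hclass n ?P ?xs f"
      and g: "g \<in> hmaps n ?P ?xs" and B: "B = hclass n ?P ?xs g" using cG by auto
    have "\<Phi> (A \<otimes>\<^bsub>?G\<^esub> B) = \<Phi> (hclass n ?P ?xs (hconcat n f g))"
      by (simp add: A B mult_hclass[OF assms(1) f g])
    also have "\<dots> = (\<lambda>i\<in>I. hclass n (X i) (x i) (hconcat n (\<lambda>p. f p i) (\<lambda>p. g p i)))"
      by (simp add: \<Phi>cl[OF mult_hclass(2)[OF assms(1) f g]] hconcat_proj)
    also have "\<dots> = \<Phi> A \<otimes>\<^bsub>?H\<^esub> \<Phi> B"
    proof -
      have m: "\<And>i. i \<in> I \<Longrightarrow> hclass n (X i) (x i) (\<lambda>p. f p i) \<otimes>\<^bsub>hawaiian_group n (X i) (x i)\<^esub>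
          hclass n (X i) (x i) (\<lambda>p. g p i) = hclass n (X i) (x i) (hconcat n (\<lambda>p. f p i) (\<lambda>p. g p i))"
        using mult_hclass(1)[OF assms(1) hmaps_prod_proj[OF f] hmaps_prod_proj[OF g]] by blast
      show ?thesis
        unfolding A B \<Phi>cl[OF f] \<Phi>cl[OF g] product_group_def monoid.select_convs
        by (intro restrict_ext) (simp only: restrict_apply' m)
    qed
    finally show "\<Phi> (A \<otimes>\<^bsub>?G\<^esub> B) = \<Phi> A \<otimes>\<^bsub>?H\<^esub> \<Phi> B" .
  qed
  have inj: "inj_on \<Phi> (carrier ?G)"
  proof (rule inj_onI)
    fix A B assume "A \<in> carrier ?G" "B \<in> carrier ?G" and e: "\<Phi> A = \<Phi> B"
    then obtain f g where f: "f \<in> hmaps n ?P ?xs" and A: "A = hclass n ?P ?xs f"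
      and g: "g \<in> hmaps n ?P ?xs" and B: "B = hclass n ?P ?xs g" using cG by auto
    have "\<forall>i\<in>I. hclass n (X i) (x i) (\<lambda>p. f p i) = hclass n (X i) (x i) (\<lambda>p. g p i)"
    proof
      fix i assume i: "i \<in> I"
      have "\<Phi> A i = \<Phi> B i" using e by simp
      then show "hclass n (X i) (x i) (\<lambda>p. f p i) = hclass n (X i) (x i) (\<lambda>p. g p i)"
        unfolding A B \<Phi>cl[OF f] \<Phi>cl[OF g] using i by simp
    qed
    then have "\<forall>i\<in>I. homotopic_with (\<lambda>h. h hbase = x i) (HE n) (X i) (\<lambda>p. f p i) (\<lambda>p. g p i)"
      by (simp add: hclass_eq_iff hmaps_prod_proj[OF f] hmaps_prod_proj[OF g])
    then show "A = B" unfolding A B by (rule hclass_eq[OF prod_homotopic[OF f g]])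
  qed
  have surj: "\<Phi> ` carrier ?G = carrier ?H"
  proof
    show "\<Phi> ` carrier ?G \<subseteq> carrier ?H" using hom by (auto simp: hom_def)
  next
    show "carrier ?H \<subseteq> \<Phi> ` carrier ?G"
    proof
      fix c assume "c \<in> carrier ?H"
      then have c: "c \<in> extensional I" "\<forall>i\<in>I. \<exists>h. h \<in> hmaps n (X i) (x i) \<and> c i = hclass n (X i) (x i) h"
        unfolding cH by (auto simp: PiE_def)
      then obtain h where h: "\<And>i. i \<in> I \<Longrightarrow> h i \<in> hmaps n (X i) (x i)"
        "\<And>i. i \<in> I \<Longrightarrow> c i = hclass n (X i) (x i) (h i)" by metis
      define f where "f = (\<lambda>p. \<lambda>i\<in>I. h i p)"
      have f: "f \<in> hmaps n ?P ?xs"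
        using h(1) by (auto simp: hmaps_prod_iff f_def hmaps_def)
      have "\<Phi> (hclass n ?P ?xs f) = c"
        unfolding \<Phi>cl[OF f] using c(1) h(2)
        by (auto simp: f_def extensional_def fun_eq_iff)
      then show "c \<in> \<Phi> ` carrier ?G" using f cG by auto
    qed
  qed
  have "\<Phi> \<in> iso ?G ?H"
    unfolding iso_def bij_betw_def using hom inj surj by auto
  then show ?thesis unfolding is_iso_def by auto
qed

end
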